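(* Let $G$ be a metabelian group (i.e. $G''=1$) with $G/G'\cong\mathbb{Z}$, and let $a,b\in G$ be such that the abelianization map $G\to G/G'$ sends $a$ and $b$ to the same generator of $\mathbb{Z}$. Then $a$ is conjugate to $b$ in $G$. *)

theory Defs
  imports "HOL-Algebra.Algebra"
begin

end

theory Submission
  imports Defs
begin

context group
begin

lemma cancel_l1 [simp]: "x \<in> carrier G \<Longrightarrow> y \<in> carrier G \<Longrightarrow> inv x \<otimes> (x \<otimes> y) = y"
  by (simp add: m_assoc[symmetric])

lemma cancel_l2 [simp]: "x \<in> carrier G \<Longrightarrow> y \<in> carrier G \<Longrightarrow> x \<otimes> (inv x \<otimes> y) = y"
  by (simp add: m_assoc[symmetric])

lemma P_mult_aux:
  assumes N: "N \<lhd> G" and M: "subgroup M G"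
    and g: "g \<in> carrier G" "\<forall>x\<in>N. g \<otimes> x \<otimes> inv g \<otimes> inv x \<in> M"
    and h: "h \<in> carrier G" "\<forall>x\<in>N. h \<otimes> x \<otimes> inv h \<otimes> inv x \<in> M"
  shows "\<forall>x\<in>N. (g \<otimes> h) \<otimes> x \<otimes> inv (g \<otimes> h) \<otimes> inv x \<in> M"
proof
  interpret N: normal N G by (rule N)
  fix x assume x: "x \<in> N"
  have xc: "x \<in> carrier G" using x N.subset by auto
  define y where "y = h \<otimes> x \<otimes> inv h"
  have y: "y \<in> N" unfolding y_def using N.inv_op_closed2 h x by auto
  have yc: "y \<in> carrier G" using y N.subset by auto
  have m1: "y \<otimes> inv x \<in> M" using h x unfolding y_def by auto
  have m2: "g \<otimes> y \<otimes> inv g \<otimes> inv y \<in> M" using g y by auto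
  have "(g \<otimes> h) \<otimes> x \<otimes> inv (g \<otimes> h) \<otimes> inv x = (g \<otimes> y \<otimes> inv g \<otimes> inv y) \<otimes> (y \<otimes> inv x)"
    using g h xc yc unfolding y_def by (simp add: m_assoc inv_mult_group)
  then show "(g \<otimes> h) \<otimes> x \<otimes> inv (g \<otimes> h) \<otimes> inv x \<in> M"
    using m1 m2 subgroup.m_closed[OF M] by simp
qed

end

theorem lemma3p3:
  fixes G (structure) and \<phi> :: "'a set \<Rightarrow> int" and a b :: 'a
  assumes "group G"
    and metabelian: "derived G (derived G (carrier G)) = {\<one>}"
    and iso: "\<phi> \<in> iso (G Mod (derived G (carrier G))) integer_group"
    and "a \<in> carrier G" and "b \<in> carrier G"
    and same: "\<phi> (derived G (carrier G) #> a) = \<phi> (derived G (carrier G) #> b)"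
    and gen: "\<phi> (derived G (carrier G) #> a) \<in> {1, -1}"
  shows "\<exists>g\<in>carrier G. b = inv g \<otimes> a \<otimes> g"
proof -
  interpret group G by fact
  note ac = \<open>a \<in> carrier G\<close> and bc = \<open>b \<in> carrier G\<close>
  define N where "N = derived G (carrier G)"
  have Nn: "N \<lhd> G" unfolding N_def by (rule derived_self_is_normal)
  interpret N: normal N G by (rule Nn)
  have Nsub: "subgroup N G" by (rule normal_imp_subgroup[OF Nn])
  have Nc: "N \<subseteq> carrier G" by (rule N.subset)
  have comm: "x \<otimes> y = y \<otimes> x" if x: "x \<in> N" and y: "y \<in> N" for x y
  proof -
    have xc: "x \<in> carrier G" and yc: "y \<in> carrier G" using x y Nc by auto
    have "x \<otimes> y \<otimes> inv x \<otimes> inv y \<in> derived G N" unfolding derived_def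
      by (rule generate.incl) (use x y in blast)
    hence e: "x \<otimes> y \<otimes> inv x \<otimes> inv y = \<one>" using metabelian N_def by auto
    have "x \<otimes> y = (x \<otimes> y \<otimes> inv x \<otimes> inv y) \<otimes> (y \<otimes> x)"
      using xc yc by (simp add: m_assoc)
    also have "\<dots> = y \<otimes> x" using e xc yc by simp
    finally show ?thesis .
  qed
  have conjN: "g \<otimes> x \<otimes> inv g \<in> N" if "g \<in> carrier G" "x \<in> N" for g x
    using N.inv_op_closed2 that by auto
  have conjN': "inv g \<otimes> x \<otimes> g \<in> N" if "g \<in> carrier G" "x \<in> N" for g x
    using N.inv_op_closed1 that by auto
  define M where "M = {a \<otimes> x \<otimes> inv a \<otimes> inv x | x. x \<in> N}"
  have Mmem: "m \<in> M" if "x \<in> N" "m = a \<otimes> x \<otimes> inv a \<otimes> inv x" for m x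
    unfolding M_def mem_Collect_eq by (rule exI[of _ x]) (rule conjI; fact)
  have MN: "M \<subseteq> N"
    unfolding M_def using conjN[OF ac] Nsub subgroup.m_closed subgroup.m_inv_closed by blast
  have Msub: "subgroup M G"
  proof (rule subgroupI)
    show "M \<subseteq> carrier G" using MN Nc by auto
    show "M \<noteq> {}" unfolding M_def using Nsub subgroup.one_closed by blast
  next
    fix m assume "m \<in> M"
    then obtain x where x: "x \<in> N" and m: "m = a \<otimes> x \<otimes> inv a \<otimes> inv x" unfolding M_def by blast
    have xc: "x \<in> carrier G" using x Nc by auto
    have X: "a \<otimes> x \<otimes> inv a \<in> N" using conjN[OF ac x] .
    have iX: "inv (a \<otimes> x \<otimes> inv a) \<in> N" using subgroup.m_inv_closed[OF Nsub X] .
    have "inv m = x \<otimes> inv (a \<otimes> x \<otimes> inv a)" using m xc ac by (simp add: m_assoc inv_mult_group)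
    also have "\<dots> = inv (a \<otimes> x \<otimes> inv a) \<otimes> x" using comm[OF x iX] .
    also have "\<dots> = a \<otimes> inv x \<otimes> inv a \<otimes> inv (inv x)" using xc ac by (simp add: m_assoc inv_mult_group)
    finally show "inv m \<in> M" by (rule Mmem[rotated]) (use x Nsub subgroup.m_inv_closed in blast)
  next
    fix m1 m2 assume "m1 \<in> M" "m2 \<in> M"
    then obtain x y where x: "x \<in> N" and m1: "m1 = a \<otimes> x \<otimes> inv a \<otimes> inv x"
      and y: "y \<in> N" and m2: "m2 = a \<otimes> y \<otimes> inv a \<otimes> inv y" unfolding M_def by blast
    have xc: "x \<in> carrier G" and yc: "y \<in> carrier G" using x y Nc by auto
    have Yy: "a \<otimes> y \<otimes> inv a \<otimes> inv y \<in> N" using m2 \<open>m2 \<in> M\<close> MN by auto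
    have ix: "inv x \<in> N" using subgroup.m_inv_closed[OF Nsub x] .
    have "a \<otimes> (x \<otimes> y) \<otimes> inv a \<otimes> inv (x \<otimes> y)
        = (a \<otimes> x \<otimes> inv a) \<otimes> ((a \<otimes> y \<otimes> inv a \<otimes> inv y) \<otimes> inv x)"
      using xc yc ac by (simp add: m_assoc inv_mult_group)
    also have "(a \<otimes> y \<otimes> inv a \<otimes> inv y) \<otimes> inv x = inv x \<otimes> (a \<otimes> y \<otimes> inv a \<otimes> inv y)"
      using comm[OF Yy ix] .
    also have "(a \<otimes> x \<otimes> inv a) \<otimes> (inv x \<otimes> (a \<otimes> y \<otimes> inv a \<otimes> inv y)) = m1 \<otimes> m2"
      using xc yc ac m1 m2 by (simp add: m_assoc)
    finally show "m1 \<otimes> m2 \<in> M" by (rule Mmem[rotated, OF sym]) (use x y Nsub subgroup.m_closed in blast)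
  qed
  define P where "P g \<longleftrightarrow> (\<forall>x\<in>N. g \<otimes> x \<otimes> inv g \<otimes> inv x \<in> M)" for g
  have P_mult: "P (g \<otimes> h)" if "g \<in> carrier G" "h \<in> carrier G" "P g" "P h" for g h
    using P_mult_aux[OF Nn Msub] that unfolding P_def by blast
  have P_one: "P \<one>" unfolding P_def
    using Nc Msub subgroup.one_closed by (auto simp: subset_iff)
  have P_a: "P a" unfolding P_def using Mmem[OF _ refl] by blast
  have P_inva: "P (inv a)" unfolding P_def
  proof
    fix x assume x: "x \<in> N"
    have xc: "x \<in> carrier G" using x Nc by auto
    define y where "y = inv a \<otimes> x \<otimes> a"
    have y: "y \<in> N" unfolding y_def using conjN'[OF ac x] .
    have "a \<otimes> y \<otimes> inv a \<otimes> inv y \<in> M" by (rule Mmem[OF y refl])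
    hence "inv (a \<otimes> y \<otimes> inv a \<otimes> inv y) \<in> M" by (rule subgroup.m_inv_closed[OF Msub])
    moreover have "inv (a \<otimes> y \<otimes> inv a \<otimes> inv y) = inv a \<otimes> x \<otimes> inv (inv a) \<otimes> inv x"
      unfolding y_def using xc ac by (simp add: m_assoc inv_mult_group)
    ultimately show "inv a \<otimes> x \<otimes> inv (inv a) \<otimes> inv x \<in> M" by simp
  qed
  have P_N: "P n" if n: "n \<in> N" for n
    unfolding P_def
  proof
    fix x assume x: "x \<in> N"
    have xc: "x \<in> carrier G" and nc: "n \<in> carrier G" using x n Nc by auto
    have "n \<otimes> x \<otimes> inv n \<otimes> inv x = x \<otimes> n \<otimes> inv n \<otimes> inv x" using comm[OF n x] by simp
    also have "\<dots> = \<one>" using xc nc by (simp add: m_assoc)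
    finally show "n \<otimes> x \<otimes> inv n \<otimes> inv x \<in> M" using Msub subgroup.one_closed by simp
  qed
  have P_nat: "P (g [^] (n::nat))" if "g \<in> carrier G" "P g" for g n
  proof (induction n)
    case 0
    then show ?case using P_one by simp
  next
    case (Suc n)
    have "P (g [^] n \<otimes> g)" by (rule P_mult[OF nat_pow_closed[OF that(1)] that(1) Suc.IH that(2)])
    then show ?case by simp
  qed
  have P_int: "P (a [^] (k::int))" for k
  proof (cases "k < 0")
    case True
    have "a [^] k = inv (a [^] nat (-k))" unfolding int_pow_def2 using True by simp
    also have "\<dots> = (inv a) [^] (nat (-k))" by (rule nat_pow_inv[OF ac, symmetric])
    finally have e: "a [^] k = (inv a) [^] (nat (-k))" .
    show ?thesis unfolding e by (rule P_nat[OF inv_closed[OF ac] P_inva])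
  next
    case False
    have e: "a [^] k = a [^] (nat k)" unfolding int_pow_def2 using False by simp
    show ?thesis unfolding e by (rule P_nat[OF ac P_a])
  qed
  have phihom: "\<phi> \<in> hom (G Mod N) integer_group" using iso_imp_homomorphism[OF iso] N_def by simp
  have phiinj: "inj_on \<phi> (carrier (G Mod N))" using iso N_def by (simp add: iso_iff)
  define \<psi> where "\<psi> = \<phi> \<circ> (\<lambda>g. N #> g)"
  have psihom: "\<psi> \<in> hom G integer_group" unfolding \<psi>_def
    by (rule Group.hom_compose[OF N.r_coset_hom_Mod phihom])
  interpret psi: group_hom G integer_group \<psi>
    by (simp add: group_hom_def group_hom_axioms_def psihom)
  define e where "e = \<psi> a"
  have ee: "e * e = 1" using gen unfolding e_def \<psi>_def N_def by auto
  have decomp: "\<exists>n\<in>N. \<exists>k::int. g = n \<otimes> a [^] k" if g: "g \<in> carrier G" for g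
  proof -
    define k where "k = \<psi> g * e"
    define h where "h = g \<otimes> inv (a [^] k)"
    have hc: "h \<in> carrier G" unfolding h_def using g ac by simp
    have "\<psi> (a [^] k) = k * e" using psi.hom_int_pow[OF ac] unfolding e_def by simp
    hence "\<psi> h = \<psi> g - k * e" unfolding h_def using g ac by simp
    also have "\<dots> = 0" unfolding k_def using ee by (simp add: mult.assoc)
    finally have "\<phi> (N #> h) = \<phi> N"
    proof -
      assume "\<psi> h = 0"
      moreover have "\<phi> N = 0"
      proof -
        interpret phi: group_hom "G Mod N" integer_group \<phi>
          by (simp add: group_hom_def group_hom_axioms_def phihom N.factorgroup_is_group)
        show ?thesis using phi.hom_one by simp
      qed
      ultimately show ?thesis unfolding \<psi>_def by simp
    qed
    moreover have "N #> h \<in> carrier (G Mod N)" using hc by (simp add: carrier_FactGroup)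
    moreover have "N \<in> carrier (G Mod N)" unfolding carrier_FactGroup by (rule image_eqI[where x="\<one>" and f="\<lambda>x. N #> x", OF coset_mult_one[OF Nc, symmetric] one_closed])
    ultimately have "N #> h = N" using phiinj by (meson inj_onD)
    hence hN: "h \<in> N" by (rule coset_join1[OF _ hc Nsub])
    have "g = h \<otimes> a [^] k" unfolding h_def using g ac by (simp add: m_assoc)
    with hN show ?thesis by blast
  qed
  have P_all: "P g" if g: "g \<in> carrier G" for g
  proof -
    obtain n k where n: "n \<in> N" and gk: "g = n \<otimes> a [^] (k::int)" using decomp[OF g] by blast
    have "n \<in> carrier G" using n Nc by auto
    then show ?thesis unfolding gk by (rule P_mult) (use ac P_N[OF n] P_int in auto)
  qed
  have commM: "g \<otimes> h \<otimes> inv g \<otimes> inv h \<in> M" if g: "g \<in> carrier G" and h: "h \<in> carrier G" for g h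
  proof -
    obtain n i where n: "n \<in> N" and gi: "g = n \<otimes> a [^] (i::int)" using decomp[OF g] by blast
    obtain m j where m: "m \<in> N" and hj: "h = m \<otimes> a [^] (j::int)" using decomp[OF h] by blast
    define c' where "c' = a [^] i"
    define c where "c = a [^] j"
    have c'c: "c' \<in> carrier G" and cc: "c \<in> carrier G" unfolding c'_def c_def using ac by auto
    have nc: "n \<in> carrier G" and mc: "m \<in> carrier G" using n m Nc by auto
    have cmm: "c' \<otimes> c = c \<otimes> c'" unfolding c'_def c_def using ac
      by (metis int_pow_mult add.commute)
    have ccz: "c' \<otimes> (c \<otimes> (inv c' \<otimes> z)) = c \<otimes> z" if "z \<in> carrier G" for z
    proof -
      have "c' \<otimes> (c \<otimes> (inv c' \<otimes> z)) = (c' \<otimes> c) \<otimes> (inv c' \<otimes> z)" using c'c cc that by (simp add: m_assoc)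
      also have "\<dots> = c \<otimes> z" using cmm c'c cc that by (simp add: m_assoc)
      finally show ?thesis .
    qed
    have inN: "inv n \<in> N" using subgroup.m_inv_closed[OF Nsub n] .
    have Y1: "c \<otimes> inv n \<otimes> inv c \<in> N" using conjN[OF cc inN] .
    have "g \<otimes> c \<otimes> inv g \<otimes> inv c = n \<otimes> (c \<otimes> inv n \<otimes> inv c)"
      unfolding gi c'_def[symmetric] using nc c'c cc by (simp add: m_assoc inv_mult_group ccz)
    also have "\<dots> = (c \<otimes> inv n \<otimes> inv c) \<otimes> inv (inv n)" using comm[OF n Y1] nc by simp
    finally have Y: "g \<otimes> c \<otimes> inv g \<otimes> inv c \<in> M"
      using P_all[OF cc] inN unfolding P_def by auto
    have YN: "g \<otimes> c \<otimes> inv g \<otimes> inv c \<in> N" using Y MN by auto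
    have imN: "inv m \<in> N" using subgroup.m_inv_closed[OF Nsub m] .
    have "g \<otimes> h \<otimes> inv g \<otimes> inv h = (g \<otimes> m \<otimes> inv g) \<otimes> ((g \<otimes> c \<otimes> inv g \<otimes> inv c) \<otimes> inv m)"
      unfolding hj c_def[symmetric] using g mc cc by (simp add: m_assoc inv_mult_group)
    also have "(g \<otimes> c \<otimes> inv g \<otimes> inv c) \<otimes> inv m = inv m \<otimes> (g \<otimes> c \<otimes> inv g \<otimes> inv c)"
      using comm[OF YN imN] .
    also have "(g \<otimes> m \<otimes> inv g) \<otimes> (inv m \<otimes> (g \<otimes> c \<otimes> inv g \<otimes> inv c))
        = (g \<otimes> m \<otimes> inv g \<otimes> inv m) \<otimes> (g \<otimes> c \<otimes> inv g \<otimes> inv c)"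
      using g mc cc by (simp add: m_assoc)
    finally show ?thesis
      using P_all[OF g] m Y subgroup.m_closed[OF Msub] unfolding P_def by auto
  qed
  have NM: "N \<subseteq> M" unfolding N_def derived_def
    by (rule generate_subgroup_incl[OF _ Msub]) (use commM in blast)
  have "N #> a = N #> b"
  proof -
    have "N #> a \<in> carrier (G Mod N)" "N #> b \<in> carrier (G Mod N)" using ac bc by (simp_all add: carrier_FactGroup)
    then show ?thesis using same phiinj N_def by (meson inj_onD)
  qed
  hence "b \<in> N #> a" using repr_independenceD[OF Nsub bc] by simp
  then obtain c where c: "c \<in> N" and bca: "b = c \<otimes> a" unfolding r_coset_def by blast
  have "c \<in> M" using c NM by auto
  then obtain x where x: "x \<in> N" and cx: "c = a \<otimes> x \<otimes> inv a \<otimes> inv x" unfolding M_def by blast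
  have xc: "x \<in> carrier G" using x Nc by auto
  have ix: "inv x \<in> N" using subgroup.m_inv_closed[OF Nsub x] .
  have "b = (a \<otimes> x \<otimes> inv a) \<otimes> inv x \<otimes> a" using bca cx by simp
  also have "(a \<otimes> x \<otimes> inv a) \<otimes> inv x = inv x \<otimes> (a \<otimes> x \<otimes> inv a)" using comm[OF conjN[OF ac x] ix] .
  also have "inv x \<otimes> (a \<otimes> x \<otimes> inv a) \<otimes> a = inv x \<otimes> a \<otimes> x" using xc ac by (simp add: m_assoc)
  finally show ?thesis using xc by blast
qed

end
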